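(* Let $q$ be an odd prime power with $q\equiv2\pmod 3$, let $m,n$ be positive integers, let $\omega\in\mathbb{F}_{q^2}$ be an element of multiplicative order $3$, and let $\varepsilon\in\mathbb{F}_q^*\cup\{\pm\omega,\pm\omega^2\}$. Then $$f(x)=(x+x^q)^m+\varepsilon(x-\omega x^q)^n$$ is a permutation polynomial of $\mathbb{F}_{q^2}$ if and only if $\gcd(mn,q-1)=1$.
   Context: A polynomial is a permutation polynomial of $\mathbb{F}_{q^2}$ if the map it induces on $\mathbb{F}_{q^2}$ is bijective. *)

theory Defs
  imports "HOL-Computational_Algebra.Primes" "HOL-Library.Cardinality"
begin

definition prime_power :: "nat \<Rightarrow> bool" where
  "prime_power q \<longleftrightarrow> (\<exists>p k. prime p \<and> k \<ge> 1 \<and> q = p ^ k)"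

definition has_mult_order :: "'a::field \<Rightarrow> nat \<Rightarrow> bool" where
  "has_mult_order w n \<longleftrightarrow> w \<noteq> 0 \<and> n > 0 \<and> w ^ n = 1 \<and> (\<forall>k. 0 < k \<and> k < n \<longrightarrow> w ^ k \<noteq> 1)"

definition subfield_Fq :: "nat \<Rightarrow> 'a::field set" where
  "subfield_Fq q = {x. x ^ q = x}"

definition permutation_polynomial :: "('a \<Rightarrow> 'a) \<Rightarrow> bool" where
  "permutation_polynomial f \<longleftrightarrow> bij f"

end

theory Submission
  imports Defs "HOL-Number_Theory.Residues" "HOL-Computational_Algebra.Polynomial"
begin

lemma ff_pow_card:
  fixes x :: "'a::{field,finite}"
  shows "x ^ CARD('a) = x"
proof (cases "x = 0")
  case False
  have "x * (\<Prod>y\<in>UNIV-{0}. x * y) = x * x ^ (card (UNIV :: 'a set) - 1) * \<Prod>(UNIV-{0})"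
    by (simp add: prod.distrib mult_ac)
  also have "x * x ^ (card (UNIV :: 'a set) - 1) = x ^ Suc (card (UNIV :: 'a set) - 1)"
    by (subst power_Suc) auto
  also have "Suc (card (UNIV :: 'a set) - 1) = card (UNIV :: 'a set)"
    using finite_UNIV_card_ge_0[where ?'a = 'a] by simp
  also have "(\<Prod>y\<in>UNIV-{0}. x * y) = (\<Prod>y\<in>UNIV-{0}. y)"
    by (rule prod.reindex_bij_witness[of _ "\<lambda>y. y / x" "\<lambda>y. x * y"]) (use False in auto)
  finally show ?thesis
    by simp
qed (use finite_UNIV_card_ge_0[where ?'a = 'a] in auto)

lemma ff_char:
  assumes "prime_power q" "CARD('a::{field,finite}) = q^2"
  shows "\<exists>p k. prime p \<and> k \<ge> 1 \<and> q = p^k \<and> CHAR('a) = p"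
proof -
  obtain p k where pk: "prime p" "k \<ge> 1" "q = p^k" using assms(1) unfolding prime_power_def by blast
  have cp: "prime CHAR('a)"
    by (rule prime_CHAR_semidom, rule finite_imp_CHAR_pos) simp
  have "CHAR('a) dvd p ^ (k*2)" using CHAR_dvd_CARD[where 'a='a] assms(2) pk
    by (simp add: power_mult)
  hence "CHAR('a) dvd p" using cp prime_dvd_power by blast
  hence "CHAR('a) = p" using cp pk(1) primes_dvd_imp_eq by blast
  thus ?thesis using pk by blast
qed

lemma roots_bound1:
  fixes a b :: "'a::field"
  assumes "N \<ge> 2"
  shows "card {x. x ^ N = a * x + b} \<le> N"
proof -
  define p where "p = monom (1::'a) N + [:-b, -a:]"
  have dl: "degree [:-b, -a:] < N" using assms by auto
  have dp: "degree p = N" unfolding p_def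
    by (subst degree_add_eq_left) (use dl in \<open>auto simp: degree_monom_eq\<close>)
  hence "p \<noteq> 0" using assms by auto
  have "{x. x ^ N = a * x + b} = {x. poly p x = 0}"
    by (auto simp: p_def poly_monom algebra_simps)
  thus ?thesis using card_poly_roots_bound[OF \<open>p \<noteq> 0\<close>] dp by simp
qed

lemma roots_bound2:
  assumes "N \<ge> 1"
  shows "card {x::'a::field. x ^ N = 1} \<le> N"
proof -
  define p where "p = monom (1::'a) N + [:-1:]"
  have dl: "degree [:-1::'a:] < N" using assms by auto
  have dp: "degree p = N" unfolding p_def
    by (subst degree_add_eq_left) (use dl in \<open>auto simp: degree_monom_eq\<close>)
  hence "p \<noteq> 0" using assms by auto
  have "{x. x ^ N = (1::'a)} = {x. poly p x = 0}"
    by (auto simp: p_def poly_monom algebra_simps)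
  thus ?thesis using card_poly_roots_bound[OF \<open>p \<noteq> 0\<close>] dp by simp
qed

lemma exists_root_unity:
  fixes r :: nat
  assumes "prime r" "r dvd CARD('a::{field,finite}) - 1"
  shows "\<exists>z::'a. z \<noteq> 1 \<and> z ^ r = 1"
proof (rule ccontr)
  assume nz: "\<not> ?thesis"
  define N where "N = CARD('a)"
  have N2: "N \<ge> 2"
  proof -
    have "{0,1::'a} \<subseteq> UNIV" by simp
    hence "card {0,1::'a} \<le> N" unfolding N_def by (rule card_mono[rotated]) simp
    thus ?thesis by simp
  qed
  obtain d where d: "N - 1 = r * d" using assms(2) N_def by (auto elim: dvdE)
  have r2: "r \<ge> 2" using assms(1) prime_ge_2_nat by blast
  have dpos: "d \<ge> 1" using d N2 by (cases d) auto
  define S where "S = UNIV - {0::'a}"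
  have inj: "inj_on (\<lambda>y. y ^ r) S"
  proof (rule inj_onI)
    fix y z assume yz: "y \<in> S" "z \<in> S" "y ^ r = z ^ r"
    hence "(y / z) ^ r = 1" using yz by (auto simp: S_def power_divide)
    hence "y / z = 1" using nz by blast
    thus "y = z" using yz by (auto simp: S_def)
  qed
  have sub: "(\<lambda>y. y ^ r) ` S \<subseteq> S" by (auto simp: S_def)
  have eq: "(\<lambda>y. y ^ r) ` S = S"
    by (rule card_subset_eq) (use sub card_image[OF inj] in \<open>auto simp: S_def\<close>)
  have "S \<subseteq> {x. x ^ d = 1}"
  proof
    fix y assume "y \<in> S"
    then obtain z where z: "z \<in> S" "y = z ^ r" using eq by blast
    have zN: "z ^ N = z" using ff_pow_card N_def by metis
    have "z ^ (N - 1) = 1"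
    proof -
      have "z * z ^ (N - 1) = z * 1" using zN N2
        by (metis One_nat_def Suc_diff_le le_trans mult.right_neutral one_le_numeral power_Suc diff_Suc_Suc minus_nat.diff_0)
      thus ?thesis using z(1) by (auto simp: S_def)
    qed
    thus "y \<in> {x. x ^ d = 1}" using z d by (simp add: power_mult[symmetric])
  qed
  hence "card S \<le> card {x::'a. x ^ d = 1}" by (intro card_mono) auto
  also have "\<dots> \<le> d" using roots_bound2 dpos by blast
  finally have "card S \<le> d" .
  moreover have "card S = N - 1" unfolding S_def N_def by (simp add: card_Diff_subset)
  ultimately show False using d r2 dpos by (metis mult_le_cancel2 not_numeral_le_zero one_le_numeral le_antisym mult_1 nat_mult_le_cancel_disj le_trans mult_le_mono1 order_refl not_less_eq_eq Suc_1 le_numeral_Suc n_not_Suc_n)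
qed

lemma ker_nonzero:
  fixes g :: "'a::{field,finite} \<Rightarrow> 'a"
  assumes "\<And>x y. g (x - y) = g x - g y" "\<And>x. g x \<in> T" "card T < CARD('a)"
  shows "\<exists>x. x \<noteq> 0 \<and> g x = 0"
proof -
  have "\<not> inj g"
  proof
    assume "inj g"
    hence "card (range g) = CARD('a)" by (simp add: card_image)
    moreover have "card (range g) \<le> card T" using assms(2) by (intro card_mono) auto
    ultimately show False using assms(3) by simp
  qed
  then obtain x y where "x \<noteq> y" "g x = g y" unfolding inj_def by blast
  thus ?thesis using assms(1)[of x y] by (intro exI[of _ "x - y"]) auto
qed

theorem proposition3p5:
  fixes q m n :: nat and \<omega> \<epsilon> :: "'a::{field,finite}"
  assumes "prime_power q" and "odd q" and "q mod 3 = 2"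
    and "CARD('a) = q ^ 2"
    and "m > 0" and "n > 0"
    and "has_mult_order \<omega> 3"
    and "\<epsilon> \<in> (subfield_Fq q - {0}) \<union> {\<omega>, -\<omega>, \<omega>^2, -(\<omega>^2)}"
  shows "permutation_polynomial (\<lambda>x::'a. (x + x ^ q) ^ m + \<epsilon> * (x - \<omega> * x ^ q) ^ n)
           \<longleftrightarrow> gcd (m * n) (q - 1) = 1"
proof -
  obtain p k where pk: "prime p" "k \<ge> 1" "q = p^k" "CHAR('a) = p"
    using ff_char[OF assms(1,4)] by blast
  have cp: "prime CHAR('a)" using pk by simp
  have q3: "q \<ge> 3" using assms(2,3) by presburger
  have add: "(x + y) ^ q = x ^ q + y ^ q" for x y :: 'a
    by (rule freshmans_dream'[OF cp]) (use pk in simp)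
  have sub: "(x - y) ^ q = x ^ q - y ^ q" for x y :: 'a
    using add[of "x - y" y] by (simp add: algebra_simps)
  have qq: "(x ^ q) ^ q = x" for x :: 'a
    using ff_pow_card[of x] assms(4) by (simp add: power_mult[symmetric] power2_eq_square)
  have two: "(2::'a) \<noteq> 0"
  proof
    assume "(2::'a) = 0"
    hence "(of_nat 2::'a) = 0" by simp
    hence "p dvd 2" using pk(4) of_nat_eq_0_iff_char_dvd by metis
    hence "p = 2" using prime_ge_2_nat[OF pk(1)] dvd_imp_le[of p 2] by auto
    hence "even q" using pk(2,3) by simp
    thus False using assms(2) by simp
  qed
  have w0: "\<omega> \<noteq> 0" and w3: "\<omega> ^ 3 = 1" and w1: "\<omega> \<noteq> 1" and w2: "\<omega> ^ 2 \<noteq> 1"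
  proof -
    have h: "\<omega> \<noteq> 0" "\<omega> ^ 3 = 1" "\<forall>k. 0 < k \<and> k < 3 \<longrightarrow> \<omega> ^ k \<noteq> 1"
      using assms(7) unfolding has_mult_order_def by blast+
    show "\<omega> \<noteq> 0" "\<omega> ^ 3 = 1" using h(1,2) .
    show "\<omega> \<noteq> 1" using spec[OF h(3), of 1] by simp
    show "\<omega> ^ 2 \<noteq> 1" using spec[OF h(3), of 2] by simp
  qed
  have wmod: "\<omega> ^ k = \<omega> ^ (k mod 3)" for k
  proof -
    have "\<omega> ^ k = \<omega> ^ (3 * (k div 3) + k mod 3)" by simp
    also have "\<dots> = (\<omega> ^ 3) ^ (k div 3) * \<omega> ^ (k mod 3)"
      by (simp only: power_add power_mult)
    also have "\<dots> = \<omega> ^ (k mod 3)" using w3 by simp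
    finally show ?thesis .
  qed
  have wq: "\<omega> ^ q = \<omega> ^ 2" using wmod[of q] assms(3) by simp
  have wneg: "\<omega> ^ k \<noteq> -1" for k
  proof -
    have "k mod 3 = 0 \<or> k mod 3 = 1 \<or> k mod 3 = 2" by presburger
    moreover have "(1::'a) \<noteq> -1"
    proof
      assume "(1::'a) = -1"
      hence "(1::'a) + 1 = 0" by (metis add.right_inverse)
      thus False using two by simp
    qed
    moreover have "\<omega> \<noteq> -1"
    proof
      assume "\<omega> = -1"
      hence "\<omega> ^ 2 = 1" by simp
      thus False using w2 by simp
    qed
    moreover have "\<omega> ^ 2 \<noteq> -1"
    proof
      assume a: "\<omega> ^ 2 = -1"
      have "\<omega> ^ 4 = \<omega> ^ 2 * \<omega> ^ 2" by (simp flip: power_add)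
      hence "\<omega> ^ 4 = 1" using a by simp
      moreover have "\<omega> ^ 4 = \<omega> ^ 3 * \<omega>" by (simp flip: power_Suc2)
      ultimately show False using w1 w3 by simp
    qed
    ultimately show ?thesis using wmod[of k] by auto
  qed
  have wneg2: "-(\<omega> ^ a) \<noteq> \<omega> ^ b" for a b
  proof
    assume h: "-(\<omega> ^ a) = \<omega> ^ b"
    have "\<omega> ^ b * \<omega> ^ (2*b) = \<omega> ^ (3*b)" by (simp flip: power_add)
    also have "\<dots> = 1" by (simp add: power_mult w3)
    finally have e: "\<omega> ^ b * \<omega> ^ (2*b) = 1" .
    have "-(\<omega> ^ (a + 2*b)) = -(\<omega> ^ a) * \<omega> ^ (2*b)" by (simp add: power_add)
    also have "\<dots> = 1" using h e by simp
    finally have "-(\<omega> ^ (a + 2*b)) = 1" .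
    hence "\<omega> ^ (a + 2*b) = -1" by (metis minus_minus)
    thus False using wneg[of "a + 2*b"] by simp
  qed
  define u where "u x = x + x ^ q" for x :: 'a
  define v where "v x = x - \<omega> * x ^ q" for x :: 'a
  have uq: "u x ^ q = u x" for x
    unfolding u_def using add qq by (simp add: add.commute)
  have vq: "v x ^ q = -(\<omega>^2) * v x" for x
  proof -
    have "v x ^ q = x ^ q - \<omega>^2 * x" unfolding v_def using sub qq wq by (simp add: power_mult_distrib)
    also have "\<dots> = -(\<omega>^2) * v x" unfolding v_def using w3
      by (simp add: algebra_simps power_numeral_reduce)
    finally show ?thesis .
  qed
  have w1': "1 + \<omega> \<noteq> 0" using wneg[of 1] by (metis add_eq_0_iff power_one_right)
  have uvinj: "x = y" if "u x = u y" "v x = v y" for x y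
  proof -
    define d where "d = x - y"
    have "d + d ^ q = 0" using that(1) unfolding u_def d_def sub by (simp add: algebra_simps)
    moreover have "d - \<omega> * d ^ q = 0" using that(2) unfolding v_def d_def sub by (simp add: algebra_simps)
    ultimately have e1: "d ^ q = -d" "d - \<omega> * d ^ q = 0" by (simp_all add: add_eq_0_iff)
    have "(1 + \<omega>) * d = d - \<omega> * d ^ q" by (simp add: e1(1) algebra_simps)
    hence "(1 + \<omega>) * d = 0" using e1(2) by simp
    thus ?thesis using w1' d_def by simp
  qed
  have f_eq: "(\<lambda>x::'a. (x + x ^ q) ^ m + \<epsilon> * (x - \<omega> * x ^ q) ^ n) = (\<lambda>x. u x ^ m + \<epsilon> * v x ^ n)"
    by (simp add: u_def v_def)
  have powinj: "a = b" if pw: "coprime k (q - 1)" "k > 0" "a ^ q = a" "b ^ q = b" "a ^ k = b ^ k" for a b :: 'a and k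
  proof (cases "b = 0")
    case True thus ?thesis using pw by (simp add: zero_power)
  next
    case False
    define r where "r = a / b"
    have rk: "r ^ k = 1" using pw False by (simp add: r_def power_divide)
    hence r0: "r \<noteq> 0" using pw by (auto simp: zero_power)
    have "r ^ q = r" using pw by (simp add: r_def power_divide)
    moreover have "r * r ^ (q - 1) = r ^ q" using q3 by (cases q) auto
    ultimately have rq1: "r ^ (q - 1) = 1" using r0 by simp
    obtain s t where st: "k * s = (q - 1) * t + gcd k (q - 1)" using bezout_nat[of k "q - 1"] pw(2) by auto
    hence "k * s = (q - 1) * t + 1" using pw(1) by simp
    hence "r ^ (k * s) = r ^ ((q - 1) * t) * r" by (simp add: power_add)
    hence "r = 1" using rk rq1 by (simp add: power_mult)
    thus ?thesis using False r_def by simp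
  qed
  show ?thesis
  proof
    assume bij: "permutation_polynomial (\<lambda>x::'a. (x + x ^ q) ^ m + \<epsilon> * (x - \<omega> * x ^ q) ^ n)"
    show "gcd (m * n) (q - 1) = 1"
    proof (rule ccontr)
      assume "gcd (m * n) (q - 1) \<noteq> 1"
      then obtain r where r: "prime r" "r dvd gcd (m * n) (q - 1)" using prime_factor_nat by blast
      have rq: "r dvd q - 1" and rmn: "r dvd m \<or> r dvd n" using r prime_dvd_mult_iff by auto
      have "q ^ 2 - 1 = (q - 1) * (q + 1)" using q3 by (cases q) (simp_all add: power2_eq_square algebra_simps)
      hence "q - 1 dvd CARD('a) - 1" using assms(4) by simp
      then obtain z :: 'a where z: "z \<noteq> 1" "z ^ r = 1" using exists_root_unity[OF r(1)] rq dvd_trans by blast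
      have z0: "z \<noteq> 0" using z prime_gt_0_nat[OF r(1)] by (auto simp: zero_power)
      have "z ^ (q - 1) = 1" using rq z by (auto elim!: dvdE simp: power_mult)
      moreover have "z * z ^ (q - 1) = z ^ q" using q3 by (cases q) auto
      ultimately have zq: "z ^ q = z" by simp
      have uz: "u (z * x) = z * u x" for x unfolding u_def by (simp add: power_mult_distrib zq algebra_simps)
      have vz: "v (z * x) = z * v x" for x unfolding v_def by (simp add: power_mult_distrib zq algebra_simps)
      have inj: "inj (\<lambda>x. u x ^ m + \<epsilon> * v x ^ n)"
        using bij f_eq unfolding permutation_polynomial_def bij_def by simp
      have qlt: "q < q * q" using mult_strict_right_mono[of 1 q q] q3 by simp
      have c1: "card {y::'a. y ^ q = 1 * y + 0} \<le> q" using roots_bound1[of q "1::'a" 0] q3 by simp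
      have cardq: "card {y::'a. y ^ q = 1 * y + 0} < CARD('a)"
        using c1 qlt assms(4) unfolding power2_eq_square by linarith
      have c2: "card {y::'a. y ^ q = -(\<omega>^2) * y + 0} \<le> q" using roots_bound1[of q "-(\<omega>^2)" 0] q3 by simp
      have cardq2: "card {y::'a. y ^ q = -(\<omega>^2) * y + 0} < CARD('a)"
        using c2 qlt assms(4) unfolding power2_eq_square by linarith
      from rmn show False
      proof
        assume "r dvd m"
        hence zm: "z ^ m = 1" using z by (auto elim!: dvdE simp: power_mult)
        obtain x where x: "x \<noteq> 0" "v x = 0"
        proof -
          have vsub: "v (a - b) = v a - v b" for a b unfolding v_def sub by (simp add: algebra_simps power_mult_distrib)
          have vin: "v a \<in> {y. y ^ q = -(\<omega>^2) * y + 0}" for a using vq by simp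
          show ?thesis using ker_nonzero[of v, OF vsub vin cardq2] that by blast
        qed
        have "u (z * x) ^ m + \<epsilon> * v (z * x) ^ n = u x ^ m + \<epsilon> * v x ^ n"
          using uz vz x zm assms(6) by (simp add: power_mult_distrib)
        hence "z * x = x" by (rule injD[OF inj])
        thus False using x z by simp
      next
        assume "r dvd n"
        hence zn: "z ^ n = 1" using z by (auto elim!: dvdE simp: power_mult)
        obtain x where x: "x \<noteq> 0" "u x = 0"
        proof -
          have usub: "u (a - b) = u a - u b" for a b unfolding u_def sub by (simp add: algebra_simps)
          have uin: "u a \<in> {y. y ^ q = 1 * y + 0}" for a using uq by simp
          show ?thesis using ker_nonzero[of u, OF usub uin cardq] that by blast
        qed
        have "u (z * x) ^ m + \<epsilon> * v (z * x) ^ n = u x ^ m + \<epsilon> * v x ^ n"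
          using uz vz x zn assms(5) by (simp add: power_mult_distrib)
        hence "z * x = x" by (rule injD[OF inj])
        thus False using x z by simp
      qed
    qed
  next
    assume g: "gcd (m * n) (q - 1) = 1"
    have cm: "coprime m (q - 1)" and cn: "coprime n (q - 1)"
    proof -
      have "coprime (m * n) (q - 1)" using g by (metis coprime_iff_gcd_eq_1)
      thus "coprime m (q - 1)" "coprime n (q - 1)" by simp_all
    qed
    have nodd: "odd n"
    proof
      assume "even n"
      moreover have "even (q - 1)" using assms(2) q3 by simp
      ultimately have "2 dvd gcd (m * n) (q - 1)" by (simp del: odd_iff_mod_2_eq_one)
      hence "(2::nat) dvd 1" using g by metis
      thus False by simp
    qed
    have key: "\<epsilon> ^ q * (-(\<omega>^2)) ^ n \<noteq> \<epsilon>"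
    proof -
      have mw: "(-(\<omega>^2)) ^ n = -(\<omega> ^ (2*n))" using nodd by (simp add: power_mult)
      have oq: "(-c) ^ q = - (c ^ q)" for c :: 'a using assms(2) by simp
      from assms(8) consider "\<epsilon> ^ q = \<epsilon>" "\<epsilon> \<noteq> 0" | "\<epsilon> = \<omega>" | "\<epsilon> = -\<omega>" | "\<epsilon> = \<omega>^2" | "\<epsilon> = -(\<omega>^2)"
        unfolding subfield_Fq_def by auto
      thus ?thesis
      proof cases
        case 1
        show ?thesis
        proof
          assume "\<epsilon> ^ q * (-(\<omega>^2)) ^ n = \<epsilon>"
          hence "-(\<omega> ^ (2*n)) = \<omega> ^ 0" using 1 mw by (metis mult_cancel_left1 power_0)
          thus False using wneg2 by blast
        qed
      next
        case 2
        have "\<epsilon> ^ q * (-(\<omega>^2)) ^ n = -(\<omega> ^ (q + 2*n))" using 2 mw by (simp add: power_add)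
        thus ?thesis using wneg2[of "q+2*n" 1] 2 by simp
      next
        case 3
        have "\<epsilon> ^ q * (-(\<omega>^2)) ^ n = \<omega> ^ (q + 2*n)" using 3 mw oq by (simp add: power_add)
        thus ?thesis using wneg2[of 1 "q+2*n"] 3 by auto
      next
        case 4
        have "\<epsilon> ^ q * (-(\<omega>^2)) ^ n = -(\<omega> ^ (2*q + 2*n))" using 4 mw
          by (simp add: power_add power_mult[symmetric] mult.commute)
        thus ?thesis using wneg2[of "2*q+2*n" 2] 4 by simp
      next
        case 5
        have "\<epsilon> ^ q * (-(\<omega>^2)) ^ n = \<omega> ^ (2*q + 2*n)" using 5 mw oq
          by (simp add: power_add power_mult[symmetric] mult.commute)
        thus ?thesis using wneg2[of 2 "2*q+2*n"] 5 by auto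
      qed
    qed
    have "inj (\<lambda>x. u x ^ m + \<epsilon> * v x ^ n)"
    proof (rule injI)
      fix x y assume h: "u x ^ m + \<epsilon> * v x ^ n = u y ^ m + \<epsilon> * v y ^ n"
      define a where "a = u x ^ m - u y ^ m"
      define c where "c = v y ^ n - v x ^ n"
      have ac: "a = \<epsilon> * c" using h by (simp add: a_def c_def algebra_simps)
      have aq: "a ^ q = a" unfolding a_def sub
        by (simp add: power_mult[symmetric] mult.commute[of m q]) (simp add: power_mult uq)
      have vn: "(v a ^ n) ^ q = (-(\<omega>^2)) ^ n * v a ^ n" for a
      proof -
        have "(v a ^ n) ^ q = (v a ^ q) ^ n" by (simp only: power_mult[symmetric] mult.commute)
        also have "\<dots> = (-(\<omega>^2)) ^ n * v a ^ n" by (simp only: vq power_mult_distrib)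
        finally show ?thesis .
      qed
      have cq: "c ^ q = (-(\<omega>^2)) ^ n * c" unfolding c_def sub vn by (simp add: algebra_simps)
      have "(\<epsilon> * c) ^ q = \<epsilon> ^ q * (-(\<omega>^2)) ^ n * c" by (simp add: power_mult_distrib cq)
      hence "\<epsilon> ^ q * (-(\<omega>^2)) ^ n * c = \<epsilon> * c" using aq ac by simp
      hence c0: "c = 0" using key by simp
      hence a0: "a = 0" using ac by simp
      have "u x = u y" using powinj[OF cm assms(5) uq uq] a0 a_def by simp
      moreover have "v x = v y"
      proof (cases "v y = 0")
        case True
        thus ?thesis using c0 c_def assms(6) by (simp add: zero_power)
      next
        case False
        define r where "r = v x / v y"
        have "r ^ q = r" unfolding r_def using vq False w0 by (simp add: power_divide)
        moreover have "r ^ n = 1 ^ n" using c0 c_def False assms(6) by (auto simp: r_def power_divide zero_power)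
        ultimately have "r = 1" using powinj[OF cn assms(6)] by simp
        thus ?thesis using False r_def by simp
      qed
      ultimately show "x = y" using uvinj by blast
    qed
    hence "bij (\<lambda>x. u x ^ m + \<epsilon> * v x ^ n)"
      by (simp add: bij_def finite_UNIV_inj_surj)
    thus "permutation_polynomial (\<lambda>x::'a. (x + x ^ q) ^ m + \<epsilon> * (x - \<omega> * x ^ q) ^ n)"
      unfolding permutation_polynomial_def f_eq .
  qed
qed

end
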